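(* Let $(h_t^\psi,h_t^{\widetilde\psi})$ be two solutions of the conditioned Langevin dynamics (described in the context) on $D$ with boundary data $\psi,\widetilde\psi$ respectively and the same conditioning $a,b$, driven by the same Brownian motions, and let $\overline h=h^\psi-h^{\widetilde\psi}$. There exists $C>0$ depending only on $\mathcal V$ such that for every $T>S$, $\sum_{x\in D}|\overline h_T(x)|^2+\int_S^T\sum_{b\in D^*}|\nabla\overline h_t(b)|^2dt\le C\Big(\sum_{x\in D}|\overline h_S(x)|^2+\int_S^T\sum_{b\in\partial D^*}|\overline\psi(x_b)||\nabla\overline h_t(b)|dt\Big)$.
   Context: $\mathcal{V}\in C^2(\mathbf{R})$ with $\mathcal{V}(x)=\mathcal{V}(-x)$, $0<a_{\mathcal V}\le\mathcal V''\le A_{\mathcal V}<\infty$, $\mathcal V''$ Lipschitz. $D\subseteq\mathbf Z^2$ is bounded, $\partial D$ the set of vertices outside $D$ adjacent to $D$, $D^*$ the edges with at least one endpoint in $D$, $\partial D^*$ the edges joining $D$ to $\partial D$, and for $b\in\partial D^*$, $x_b$ is its endpoint in $\partial D$; $\nabla f(b)=f(y)-f(x)$ for $b=(x,y)$; gradients of $\overline h$ on boundary edges use the extension by $\overline\psi=\psi-\widetilde\psi$ on $\partial D$. $a,b:D\to[-\infty,\infty]$ with $a\le b$. The conditioned Langevin dynamics with boundary data $\psi$ is the solution of $dh_t(x)=\sum_{b\ni x}\mathcal V'(\nabla(h_t\vee\psi)(b))dt+d[\ell_t^a-\ell_t^b](x)+\sqrt2dW_t(x)$, $x\in D$, $t\in\mathbf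 R$, where the edges $b\ni x$ are oriented with initial point $x$, $h\vee\psi$ is $h$ on $D$ and $\psi$ on $\partial D$, $W$ is a family of independent standard two-sided Brownian motions, and $\ell^a(x),\ell^b(x)$ are non-decreasing bounded-variation processes which increase only when $h_t(x)=a(x)$, resp. $h_t(x)=b(x)$ ($\ell^a\equiv0$ if $a(x)=-\infty$, $\ell^b\equiv0$ if $b(x)=\infty$), keeping $a\le h_t\le b$. *)

theory Defs
  imports "HOL-Analysis.Analysis" "HOL-Library.Extended_Real"
begin

type_synonym site = "int \<times> int"

definition adj :: "site \<Rightarrow> site \<Rightarrow> bool" where
  "adj x y \<longleftrightarrow> \<bar>fst x - fst y\<bar> + \<bar>snd x - snd y\<bar> = 1"

definition bdry :: "site set \<Rightarrow> site set" where
  "bdry D = {y. y \<notin> D \<and> (\<exists>x\<in>D. adj x y)}"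

text \<open>Unoriented nearest-neighbour edges of Z^2, each represented exactly once
  as the pair (x, x + e) with e a positive unit vector.\<close>
definition lattice_edges :: "(site \<times> site) set" where
  "lattice_edges = {(x, y). y = (fst x + 1, snd x) \<or> y = (fst x, snd x + 1)}"

definition Dstar :: "site set \<Rightarrow> (site \<times> site) set" where
  "Dstar D = {(x, y) \<in> lattice_edges. x \<in> D \<or> y \<in> D}"

definition bdry_edges :: "site set \<Rightarrow> (site \<times> site) set" where
  "bdry_edges D = {(x, y) \<in> lattice_edges.
      (x \<in> D \<and> y \<in> bdry D) \<or> (y \<in> D \<and> x \<in> bdry D)}"

definition bdry_pt :: "site set \<Rightarrow> site \<times> site \<Rightarrow> site" where
  "bdry_pt D e = (if fst e \<in> D then snd e else fst e)"

definition grad :: "(site \<Rightarrow> real) \<Rightarrow> site \<times> site \<Rightarrow> real" where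
  "grad f e = f (snd e) - f (fst e)"

definition ext :: "site set \<Rightarrow> (site \<Rightarrow> real) \<Rightarrow> (site \<Rightarrow> real) \<Rightarrow> site \<Rightarrow> real" where
  "ext D h \<psi> x = (if x \<in> D then h x else \<psi> x)"

definition drift :: "(real \<Rightarrow> real) \<Rightarrow> site set \<Rightarrow> (site \<Rightarrow> real) \<Rightarrow> (site \<Rightarrow> real) \<Rightarrow> site \<Rightarrow> real" where
  "drift V' D \<psi> h x = (\<Sum>y\<in>{y. adj x y}. V' (ext D h \<psi> y - ext D h \<psi> x))"

text \<open>Pathwise notion of solution of the conditioned Langevin dynamics on D with
  boundary data psi, conditioning a \<le> b, driven by the path W (noise is additive,
  so the SDE is understood pathwise in integrated form, for all times s \<le> t in R).
  la, lb are the processes l^a, l^b.\<close>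
definition langevin_sol ::
  "(real \<Rightarrow> real) \<Rightarrow> site set \<Rightarrow> (site \<Rightarrow> real) \<Rightarrow> (site \<Rightarrow> ereal) \<Rightarrow> (site \<Rightarrow> ereal)
   \<Rightarrow> (real \<Rightarrow> site \<Rightarrow> real) \<Rightarrow> (real \<Rightarrow> site \<Rightarrow> real)
   \<Rightarrow> (real \<Rightarrow> site \<Rightarrow> real) \<Rightarrow> (real \<Rightarrow> site \<Rightarrow> real) \<Rightarrow> bool" where
  "langevin_sol V' D \<psi> a b W h la lb \<longleftrightarrow>
     (\<forall>x\<in>D. continuous_on UNIV (\<lambda>t. h t x)) \<and>
     (\<forall>x\<in>D. \<forall>t. a x \<le> ereal (h t x) \<and> ereal (h t x) \<le> b x) \<and>
     (\<forall>x\<in>D. mono (\<lambda>t. la t x) \<and> mono (\<lambda>t. lb t x)) \<and>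
     (\<forall>x\<in>D. a x = -\<infinity> \<longrightarrow> (\<forall>t. la t x = 0)) \<and>
     (\<forall>x\<in>D. b x = \<infinity> \<longrightarrow> (\<forall>t. lb t x = 0)) \<and>
     (\<forall>x\<in>D. \<forall>s t. s \<le> t \<and> (\<forall>u\<in>{s..t}. ereal (h u x) \<noteq> a x) \<longrightarrow> la s x = la t x) \<and>
     (\<forall>x\<in>D. \<forall>s t. s \<le> t \<and> (\<forall>u\<in>{s..t}. ereal (h u x) \<noteq> b x) \<longrightarrow> lb s x = lb t x) \<and>
     (\<forall>x\<in>D. \<forall>s t. s \<le> t \<longrightarrow>
        h t x - h s x = integral {s..t} (\<lambda>u. drift V' D \<psi> (h u) x)
                        + (la t x - la s x) - (lb t x - lb s x)
                        + sqrt 2 * (W t x - W s x))"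

end

theory Submission
  imports Defs
begin

lemma real_induct_decr:
  fixes \<phi> :: "real \<Rightarrow> real"
  assumes ST: "S \<le> T" and cont: "continuous_on {S..T} \<phi>"
    and loc: "\<And>t0 \<epsilon>. t0 \<in> {S..<T} \<Longrightarrow> \<epsilon> > 0 \<Longrightarrow>
       \<exists>\<delta>>0. \<forall>t. t0 < t \<and> t < t0 + \<delta> \<and> t \<le> T \<longrightarrow> \<phi> t \<le> \<phi> t0 + \<epsilon> * (t - t0)"
  shows "\<phi> T \<le> \<phi> S"
proof -
  have key: "\<phi> T \<le> \<phi> S + \<epsilon> * (T - S)" if \<epsilon>: "\<epsilon> > 0" for \<epsilon>
  proof -
    define A where "A = {S..T} \<inter> (\<lambda>t. \<phi> t - (\<phi> S + \<epsilon> * (t - S))) -` {..0}"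
    have c2: "continuous_on {S..T} (\<lambda>t. \<phi> t - (\<phi> S + \<epsilon> * (t - S)))"
      by (intro continuous_intros cont)
    have clA: "closed A" unfolding A_def
      by (rule continuous_closed_preimage[OF c2]) auto
    have SA: "S \<in> A" using ST unfolding A_def by auto
    have bdd: "bdd_above A" unfolding A_def by (rule bdd_aboveI[of _ T]) auto
    define m where "m = Sup A"
    have mA: "m \<in> A" unfolding m_def using closed_contains_Sup[OF _ bdd clA] SA by blast
    have mle: "\<And>t. t \<in> A \<Longrightarrow> t \<le> m" unfolding m_def using bdd by (simp add: cSup_upper)
    have mT: "m = T"
    proof (rule ccontr)
      assume "m \<noteq> T"
      with mA have mlt: "m < T" and Sm: "S \<le> m" unfolding A_def by auto
      obtain \<delta> where d: "\<delta> > 0" and dd: "\<forall>t. m < t \<and> t < m + \<delta> \<and> t \<le> T \<longrightarrow> \<phi> t \<le> \<phi> m + \<epsilon> * (t - m)"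
        using loc[of m \<epsilon>] mlt Sm \<epsilon> by auto
      define t where "t = min T (m + \<delta>/2)"
      have t1: "m < t" "t < m + \<delta>" "t \<le> T" using d mlt unfolding t_def by auto
      have "\<phi> t \<le> \<phi> m + \<epsilon> * (t - m)" using dd t1 by auto
      moreover have "\<phi> m \<le> \<phi> S + \<epsilon> * (m - S)" using mA unfolding A_def by auto
      ultimately have "\<phi> t \<le> \<phi> S + \<epsilon> * (t - S)" by (simp add: algebra_simps)
      then have "t \<in> A" using t1 Sm unfolding A_def by auto
      then show False using mle t1 by fastforce
    qed
    show ?thesis using mA mT unfolding A_def by auto
  qed
  show ?thesis
  proof (rule field_le_epsilon)
    fix e :: real assume e: "0 < e"
    have "\<phi> T \<le> \<phi> S + (e / (T - S + 1)) * (T - S)" using key[of "e / (T - S + 1)"] e ST by auto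
    also have "(e / (T - S + 1)) * (T - S) \<le> e" using e ST by (simp add: field_simps)
    finally show "\<phi> T \<le> \<phi> S + e" by simp
  qed
qed



lemma cont_eps:
  fixes f :: "real \<Rightarrow> real"
  assumes "continuous_on UNIV f" "e > 0"
  shows "\<exists>d>0. \<forall>u. \<bar>u - x\<bar> < d \<longrightarrow> \<bar>f u - f x\<bar> < e"
proof -
  have "isCont f x" using assms(1) by (simp add: continuous_on_eq_continuous_at)
  then show ?thesis using assms(2) unfolding continuous_at_eps_delta dist_real_def by blast
qed

lemma cont_int:
  fixes f :: "real \<Rightarrow> real"
  assumes "continuous_on UNIV f"
  shows "f integrable_on {a..b}"
  by (rule integrable_continuous_interval) (rule continuous_on_subset[OF assms], auto)

lemma local_pos:
  fixes g f L :: "real \<Rightarrow> real"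
  assumes cg: "continuous_on UNIV g" and cf: "continuous_on UNIV f"
    and eq: "\<And>s t. s \<le> t \<Longrightarrow> g t - g s = integral {s..t} f + (L t - L s)"
    and pos: "\<And>s t. s \<le> t \<Longrightarrow> (\<forall>u\<in>{s..t}. g u > 0) \<Longrightarrow> L t \<le> L s"
    and g0: "g t0 > 0" and \<epsilon>: "\<epsilon> > 0"
  shows "\<exists>\<delta>>0. \<forall>t. t0 < t \<and> t < t0 + \<delta> \<longrightarrow>
     (g t)\<^sup>2 - (g t0)\<^sup>2 - 2 * integral {t0..t} (\<lambda>u. g u * f u) \<le> \<epsilon> * (t - t0)"
proof -
  define M where "M = \<bar>f t0\<bar> + 1"
  have M: "M > 0" unfolding M_def by simp
  define \<eta> where "\<eta> = min (g t0) (\<epsilon> / (3 * M))"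
  have \<eta>: "\<eta> > 0" unfolding \<eta>_def using g0 \<epsilon> M by simp
  obtain d1 where d1: "d1 > 0" "\<forall>u. \<bar>u - t0\<bar> < d1 \<longrightarrow> \<bar>f u - f t0\<bar> < 1"
    using cont_eps[OF cf, of 1 t0] by auto
  obtain d2 where d2: "d2 > 0" "\<forall>u. \<bar>u - t0\<bar> < d2 \<longrightarrow> \<bar>g u - g t0\<bar> < \<eta>"
    using cont_eps[OF cg \<eta>, of t0] by auto
  show ?thesis
  proof (intro exI[of _ "min d1 d2"] conjI allI impI)
    show "min d1 d2 > 0" using d1 d2 by simp
    fix t assume t: "t0 < t \<and> t < t0 + min d1 d2"
    have Uf: "\<bar>f u\<bar> \<le> M" if "u \<in> {t0..t}" for u
    proof -
      have "\<bar>u - t0\<bar> < d1" using that t by auto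
      then have "\<bar>f u - f t0\<bar> < 1" using d1(2) by blast
      then show ?thesis unfolding M_def by linarith
    qed
    have Ug: "\<bar>g u - g t0\<bar> < \<eta>" if "u \<in> {t0..t}" for u
      using d2(2)[rule_format, of u] that t by auto
    have gpos: "\<forall>u\<in>{t0..t}. g u > 0"
    proof
      fix u assume "u \<in> {t0..t}"
      then have "\<bar>g u - g t0\<bar> < \<eta>" by (rule Ug)
      moreover have "\<eta> \<le> g t0" unfolding \<eta>_def by simp
      ultimately show "g u > 0" by linarith
    qed
    have Lle: "L t \<le> L t0" using pos[of t0 t] gpos t by auto
    define I where "I = integral {t0..t} f"
    have gI: "g t - g t0 \<le> I" using eq[of t0 t] Lle t unfolding I_def by auto
    define c where "c = g t + g t0"
    have "g t > 0" using gpos t by auto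
    then have cpos: "c > 0" unfolding c_def using g0 by linarith
    have "(g t)\<^sup>2 - (g t0)\<^sup>2 = (g t - g t0) * c" unfolding c_def by (simp add: power2_eq_square algebra_simps)
    also have "\<dots> \<le> I * c" using gI cpos by (simp add: mult_right_mono)
    finally have s1: "(g t)\<^sup>2 - (g t0)\<^sup>2 \<le> I * c" .
    have ig: "(\<lambda>u. g u * f u) integrable_on {t0..t}"
      by (rule cont_int, intro continuous_intros cg cf)
    have ifi: "f integrable_on {t0..t}" by (rule cont_int[OF cf])
    have "I * c - 2 * integral {t0..t} (\<lambda>u. g u * f u)
        = integral {t0..t} (\<lambda>u. f u * c) - integral {t0..t} (\<lambda>u. 2 * (g u * f u))"
      unfolding I_def by simp
    also have "\<dots> = integral {t0..t} (\<lambda>u. f u * c - 2 * (g u * f u))"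
      by (rule integral_diff[symmetric]) (auto intro: ifi ig integrable_on_mult_left integrable_on_cmult_left)
    also have "\<dots> \<le> integral {t0..t} (\<lambda>u. \<epsilon>)"
    proof (rule integral_le)
      show "(\<lambda>u. f u * c - 2 * (g u * f u)) integrable_on {t0..t}"
        by (rule cont_int, intro continuous_intros cg cf)
      show "(\<lambda>u. \<epsilon>) integrable_on {t0..t}" by (rule cont_int) simp
      fix u assume u: "u \<in> {t0..t}"
      have e1: "f u * c - 2 * (g u * f u) = f u * (c - 2 * g u)" by (simp add: algebra_simps)
      have "\<bar>c - 2 * g u\<bar> \<le> \<bar>g t - g t0\<bar> + 2 * \<bar>g u - g t0\<bar>" unfolding c_def by (smt (verit))
      also have "\<dots> \<le> 3 * \<eta>" using Ug[OF u] Ug[of t] t by auto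
      also have "\<dots> \<le> 3 * (\<epsilon> / (3 * M))" unfolding \<eta>_def by simp
      also have "\<dots> = \<epsilon> / M" by simp
      finally have cb: "\<bar>c - 2 * g u\<bar> \<le> \<epsilon> / M" .
      have "f u * (c - 2 * g u) \<le> \<bar>f u\<bar> * \<bar>c - 2 * g u\<bar>" by (simp add: abs_mult[symmetric])
      also have "\<dots> \<le> M * (\<epsilon> / M)" using Uf[OF u] cb by (intro mult_mono) auto
      also have "\<dots> = \<epsilon>" using M by simp
      finally show "f u * c - 2 * (g u * f u) \<le> \<epsilon>" using e1 by simp
    qed
    also have "\<dots> = \<epsilon> * (t - t0)" using t by simp
    finally show "(g t)\<^sup>2 - (g t0)\<^sup>2 - 2 * integral {t0..t} (\<lambda>u. g u * f u) \<le> \<epsilon> * (t - t0)"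
      using s1 by linarith
  qed
qed


lemma zero_bound_pos:
  fixes g f L :: "real \<Rightarrow> real"
  assumes cg: "continuous_on UNIV g" and cf: "continuous_on UNIV f"
    and eq: "\<And>s t. s \<le> t \<Longrightarrow> g t - g s = integral {s..t} f + (L t - L s)"
    and pos: "\<And>s t. s \<le> t \<Longrightarrow> (\<forall>u\<in>{s..t}. g u > 0) \<Longrightarrow> L t \<le> L s"
    and tt: "t0 < t" and g0: "g t0 \<le> 0" and fM: "\<forall>u\<in>{t0..t}. \<bar>f u\<bar> \<le> M" and gt: "g t > 0"
  shows "g t \<le> M * (t - t0)"
proof -
  have "\<bar>f t0\<bar> \<le> M" using fM tt by auto
  then have M0: "M \<ge> 0" by linarith
  define Z where "Z = {t0..t} \<inter> g -` {..0}"
  have clZ: "closed Z" unfolding Z_def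
    by (rule continuous_closed_preimage) (auto intro: continuous_on_subset[OF cg])
  have t0Z: "t0 \<in> Z" unfolding Z_def using tt g0 by auto
  have bdd: "bdd_above Z" unfolding Z_def by (rule bdd_aboveI[of _ t]) auto
  define s where "s = Sup Z"
  have sZ: "s \<in> Z" unfolding s_def using closed_contains_Sup[OF _ bdd clZ] t0Z by blast
  have sle: "\<And>u. u \<in> Z \<Longrightarrow> u \<le> s" unfolding s_def using bdd by (simp add: cSup_upper)
  have gs: "g s \<le> 0" and s1: "t0 \<le> s" and s2: "s \<le> t" using sZ unfolding Z_def by auto
  have st: "s < t" using s2 gs gt by (cases "s = t") auto
  have bnd: "g t \<le> g s' + M * (t - t0)" if s': "s < s'" "s' \<le> t" for s'
  proof -
    have "\<forall>u\<in>{s'..t}. g u > 0"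
    proof
      fix u assume u: "u \<in> {s'..t}"
      show "g u > 0"
      proof (rule ccontr)
        assume "\<not> g u > 0"
        then have "u \<in> Z" unfolding Z_def using u s' s1 by auto
        then show False using sle u s' by fastforce
      qed
    qed
    then have "L t \<le> L s'" using pos[of s' t] s' by auto
    then have "g t - g s' \<le> integral {s'..t} f" using eq[of s' t] s' by auto
    also have "\<dots> \<le> integral {s'..t} (\<lambda>_. M)"
    proof (rule integral_le)
      fix x assume "x \<in> {s'..t}"
      then have "\<bar>f x\<bar> \<le> M" using fM s' s1 by auto
      then show "f x \<le> M" by linarith
    qed (auto intro: cont_int[OF cf])
    also have "\<dots> = M * (t - s')" using s' by simp
    also have "\<dots> \<le> M * (t - t0)" using M0 s' s1 by (intro mult_left_mono) auto
    finally show ?thesis by simp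
  qed
  show ?thesis
  proof (rule ccontr)
    assume "\<not> g t \<le> M * (t - t0)"
    then have c: "g t - M * (t - t0) > 0" by simp
    obtain d where d: "d > 0" "\<forall>u. \<bar>u - s\<bar> < d \<longrightarrow> \<bar>g u - g s\<bar> < g t - M * (t - t0)"
      using cont_eps[OF cg c, of s] by auto
    define s' where "s' = min t (s + d/2)"
    have "s < s'" "s' \<le> t" "\<bar>s' - s\<bar> < d" using st d unfolding s'_def by auto
    then have "g t \<le> g s' + M * (t - t0)" "\<bar>g s' - g s\<bar> < g t - M * (t - t0)"
      using bnd d by auto
    then show False using gs by linarith
  qed
qed

lemma neg_eq:
  fixes g f L :: "real \<Rightarrow> real"
  assumes eq: "\<And>s t. s \<le> t \<Longrightarrow> g t - g s = integral {s..t} f + (L t - L s)"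
  shows "\<And>s t. s \<le> t \<Longrightarrow> (\<lambda>x. - g x) t - (\<lambda>x. - g x) s = integral {s..t} (\<lambda>x. - f x) + ((\<lambda>x. - L x) t - (\<lambda>x. - L x) s)"
  using eq by (simp add: algebra_simps)


lemma local_zero:
  fixes g f L :: "real \<Rightarrow> real"
  assumes cg: "continuous_on UNIV g" and cf: "continuous_on UNIV f"
    and eq: "\<And>s t. s \<le> t \<Longrightarrow> g t - g s = integral {s..t} f + (L t - L s)"
    and pos: "\<And>s t. s \<le> t \<Longrightarrow> (\<forall>u\<in>{s..t}. g u > 0) \<Longrightarrow> L t \<le> L s"
    and neg: "\<And>s t. s \<le> t \<Longrightarrow> (\<forall>u\<in>{s..t}. g u < 0) \<Longrightarrow> L s \<le> L t"
    and g0: "g t0 = 0" and \<epsilon>: "\<epsilon> > 0"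
  shows "\<exists>\<delta>>0. \<forall>t. t0 < t \<and> t < t0 + \<delta> \<longrightarrow>
     (g t)\<^sup>2 - (g t0)\<^sup>2 - 2 * integral {t0..t} (\<lambda>u. g u * f u) \<le> \<epsilon> * (t - t0)"
proof -
  define M where "M = \<bar>f t0\<bar> + 1"
  have M: "M > 0" unfolding M_def by simp
  define \<eta> where "\<eta> = \<epsilon> / (4 * M)"
  have \<eta>: "\<eta> > 0" unfolding \<eta>_def using \<epsilon> M by simp
  obtain d1 where d1: "d1 > 0" "\<forall>u. \<bar>u - t0\<bar> < d1 \<longrightarrow> \<bar>f u - f t0\<bar> < 1"
    using cont_eps[OF cf, of 1 t0] by auto
  obtain d2 where d2: "d2 > 0" "\<forall>u. \<bar>u - t0\<bar> < d2 \<longrightarrow> \<bar>g u - g t0\<bar> < \<eta>"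
    using cont_eps[OF cg \<eta>, of t0] by auto
  define d3 where "d3 = \<epsilon> / (2 * M * M)"
  have d3: "d3 > 0" unfolding d3_def using \<epsilon> M by simp
  show ?thesis
  proof (intro exI[of _ "min d1 (min d2 d3)"] conjI allI impI)
    show "min d1 (min d2 d3) > 0" using d1 d2 d3 by simp
    fix t assume t: "t0 < t \<and> t < t0 + min d1 (min d2 d3)"
    have Uf: "\<forall>u\<in>{t0..t}. \<bar>f u\<bar> \<le> M"
    proof
      fix u assume "u \<in> {t0..t}"
      then have "\<bar>u - t0\<bar> < d1" using t by auto
      then have "\<bar>f u - f t0\<bar> < 1" using d1(2) by blast
      then show "\<bar>f u\<bar> \<le> M" unfolding M_def by linarith
    qed
    have Ug: "\<bar>g u\<bar> < \<eta>" if "u \<in> {t0..t}" for u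
      using d2(2)[rule_format, of u] that t g0 by auto
    have gb: "\<bar>g t\<bar> \<le> M * (t - t0)"
    proof (cases "g t > 0")
      case True
      have tt: "t0 < t" using t by simp
      have "g t \<le> M * (t - t0)" by (rule zero_bound_pos[OF cg cf eq pos tt]) (use g0 Uf True in auto)
      then show ?thesis using True by simp
    next
      case False
      show ?thesis
      proof (cases "g t < 0")
        case True
        have "- g t \<le> M * (t - t0)"
        proof (rule zero_bound_pos[of "\<lambda>x. - g x" "\<lambda>x. - f x" "\<lambda>x. - L x" t0 t M])
          show "t0 < t" using t by simp
          show "continuous_on UNIV (\<lambda>x. - g x)" by (intro continuous_intros cg)
          show "continuous_on UNIV (\<lambda>x. - f x)" by (intro continuous_intros cf)
          show "\<And>s t. s \<le> t \<Longrightarrow> (\<lambda>x. - g x) t - (\<lambda>x. - g x) s = integral {s..t} (\<lambda>x. - f x) + ((\<lambda>x. - L x) t - (\<lambda>x. - L x) s)"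
            by (rule neg_eq[OF eq])
          show "\<And>s t. s \<le> t \<Longrightarrow> \<forall>u\<in>{s..t}. 0 < - g u \<Longrightarrow> - L t \<le> - L s"
            using neg by force
        qed (use g0 Uf True in auto)
        then show ?thesis using True by simp
      next
        case False
        then show ?thesis using \<open>\<not> g t > 0\<close> t M by simp
      qed
    qed
    have "(g t)\<^sup>2 = \<bar>g t\<bar> * \<bar>g t\<bar>" by (simp add: power2_eq_square abs_mult[symmetric])
    also have "\<dots> \<le> (M * (t - t0)) * (M * (t - t0))" using gb by (intro mult_mono) auto
    also have "\<dots> \<le> (M * M * d3) * (t - t0)"
    proof -
      have "M * M * (t - t0) \<le> M * M * d3" using t M by (intro mult_left_mono) auto
      then have "(M * M * (t - t0)) * (t - t0) \<le> (M * M * d3) * (t - t0)" using t by (intro mult_right_mono) auto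
      then show ?thesis by (simp add: algebra_simps)
    qed
    also have "M * M * d3 = \<epsilon> / 2" unfolding d3_def using M by simp
    finally have s1: "(g t)\<^sup>2 \<le> \<epsilon> / 2 * (t - t0)" .
    have "- integral {t0..t} (\<lambda>u. g u * f u) = integral {t0..t} (\<lambda>u. - (g u * f u))" by simp
    also have "\<dots> \<le> integral {t0..t} (\<lambda>u. \<eta> * M)"
    proof (rule integral_le)
      show "(\<lambda>u. - (g u * f u)) integrable_on {t0..t}" by (rule cont_int, intro continuous_intros cg cf)
      show "(\<lambda>u. \<eta> * M) integrable_on {t0..t}" by (rule cont_int) simp
      fix u assume u: "u \<in> {t0..t}"
      have "- (g u * f u) \<le> \<bar>g u\<bar> * \<bar>f u\<bar>" by (simp add: abs_mult[symmetric])
      also have "\<dots> \<le> \<eta> * M" using Ug[OF u] Uf u by (intro mult_mono) auto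
      finally show "- (g u * f u) \<le> \<eta> * M" .
    qed
    also have "\<dots> = \<epsilon> / 4 * (t - t0)" using t M unfolding \<eta>_def by simp
    finally have s2: "- integral {t0..t} (\<lambda>u. g u * f u) \<le> \<epsilon> / 4 * (t - t0)" .
    show "(g t)\<^sup>2 - (g t0)\<^sup>2 - 2 * integral {t0..t} (\<lambda>u. g u * f u) \<le> \<epsilon> * (t - t0)"
    proof -
      have "0 \<le> \<epsilon> / 4 * (t - t0)" using t \<epsilon> by simp
      then show ?thesis using s1 s2 g0 by (simp add: algebra_simps)
    qed
  qed
qed



lemma local_all:
  fixes g f L :: "real \<Rightarrow> real"
  assumes cg: "continuous_on UNIV g" and cf: "continuous_on UNIV f"
    and eq: "\<And>s t. s \<le> t \<Longrightarrow> g t - g s = integral {s..t} f + (L t - L s)"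
    and pos: "\<And>s t. s \<le> t \<Longrightarrow> (\<forall>u\<in>{s..t}. g u > 0) \<Longrightarrow> L t \<le> L s"
    and neg: "\<And>s t. s \<le> t \<Longrightarrow> (\<forall>u\<in>{s..t}. g u < 0) \<Longrightarrow> L s \<le> L t"
    and \<epsilon>: "\<epsilon> > 0"
  shows "\<exists>\<delta>>0. \<forall>t. t0 < t \<and> t < t0 + \<delta> \<longrightarrow>
     (g t)\<^sup>2 - (g t0)\<^sup>2 - 2 * integral {t0..t} (\<lambda>u. g u * f u) \<le> \<epsilon> * (t - t0)"
proof (cases "g t0 > 0")
  case True
  then show ?thesis using local_pos[OF cg cf eq pos True \<epsilon>] by blast
next
  case False
  show ?thesis
  proof (cases "g t0 < 0")
    case True
    have "\<exists>\<delta>>0. \<forall>t. t0 < t \<and> t < t0 + \<delta> \<longrightarrow>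
     ((\<lambda>x. - g x) t)\<^sup>2 - ((\<lambda>x. - g x) t0)\<^sup>2 - 2 * integral {t0..t} (\<lambda>u. (\<lambda>x. - g x) u * (\<lambda>x. - f x) u) \<le> \<epsilon> * (t - t0)"
    proof (rule local_pos[of "\<lambda>x. - g x" "\<lambda>x. - f x" "\<lambda>x. - L x"])
      show "continuous_on UNIV (\<lambda>x. - g x)" by (intro continuous_intros cg)
      show "continuous_on UNIV (\<lambda>x. - f x)" by (intro continuous_intros cf)
      show "\<And>s t. s \<le> t \<Longrightarrow> (\<lambda>x. - g x) t - (\<lambda>x. - g x) s = integral {s..t} (\<lambda>x. - f x) + ((\<lambda>x. - L x) t - (\<lambda>x. - L x) s)"
        by (rule neg_eq[OF eq])
      show "\<And>s t. s \<le> t \<Longrightarrow> \<forall>u\<in>{s..t}. 0 < - g u \<Longrightarrow> - L t \<le> - L s"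
        using neg by force
    qed (use True \<epsilon> in auto)
    then show ?thesis by simp
  next
    case False
    then have "g t0 = 0" using \<open>\<not> g t0 > 0\<close> by simp
    then show ?thesis using local_zero[OF cg cf eq pos neg _ \<epsilon>] by blast
  qed
qed

lemma energy_1d:
  fixes g f L :: "real \<Rightarrow> real"
  assumes cg: "continuous_on UNIV g" and cf: "continuous_on UNIV f"
    and eq: "\<And>s t. s \<le> t \<Longrightarrow> g t - g s = integral {s..t} f + (L t - L s)"
    and pos: "\<And>s t. s \<le> t \<Longrightarrow> (\<forall>u\<in>{s..t}. g u > 0) \<Longrightarrow> L t \<le> L s"
    and neg: "\<And>s t. s \<le> t \<Longrightarrow> (\<forall>u\<in>{s..t}. g u < 0) \<Longrightarrow> L s \<le> L t"
    and ST: "S \<le> T"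
  shows "(g T)\<^sup>2 - (g S)\<^sup>2 \<le> 2 * integral {S..T} (\<lambda>u. g u * f u)"
proof -
  define \<phi> where "\<phi> t = (g t)\<^sup>2 - 2 * integral {S..t} (\<lambda>u. g u * f u)" for t
  have cgf: "continuous_on UNIV (\<lambda>u. g u * f u)" by (intro continuous_intros cg cf)
  have "\<phi> T \<le> \<phi> S"
  proof (rule real_induct_decr[OF ST])
    show "continuous_on {S..T} \<phi>" unfolding \<phi>_def
      by (intro continuous_intros continuous_on_subset[OF cg] indefinite_integral_continuous_1 cont_int cgf) auto
    fix t0 \<epsilon> :: real assume t0: "t0 \<in> {S..<T}" and \<epsilon>: "\<epsilon> > 0"
    obtain \<delta> where d: "\<delta> > 0" and dd: "\<forall>t. t0 < t \<and> t < t0 + \<delta> \<longrightarrow>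
     (g t)\<^sup>2 - (g t0)\<^sup>2 - 2 * integral {t0..t} (\<lambda>u. g u * f u) \<le> \<epsilon> * (t - t0)"
      using local_all[OF cg cf eq pos neg \<epsilon>, of t0] by blast
    show "\<exists>\<delta>>0. \<forall>t. t0 < t \<and> t < t0 + \<delta> \<and> t \<le> T \<longrightarrow> \<phi> t \<le> \<phi> t0 + \<epsilon> * (t - t0)"
    proof (intro exI[of _ \<delta>] conjI allI impI)
      show "\<delta> > 0" by (rule d)
      fix t assume t: "t0 < t \<and> t < t0 + \<delta> \<and> t \<le> T"
      have "integral {S..t0} (\<lambda>u. g u * f u) + integral {t0..t} (\<lambda>u. g u * f u) = integral {S..t} (\<lambda>u. g u * f u)"
        by (rule Henstock_Kurzweil_Integration.integral_combine) (use t0 t in \<open>auto intro: cont_int cgf\<close>)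
      then show "\<phi> t \<le> \<phi> t0 + \<epsilon> * (t - t0)" using dd t unfolding \<phi>_def by auto
    qed
  qed
  then show ?thesis unfolding \<phi>_def by simp
qed



lemma adj_char:
  "adj x y \<longleftrightarrow> y \<in> {(fst x + 1, snd x), (fst x - 1, snd x), (fst x, snd x + 1), (fst x, snd x - 1)}"
proof -
  obtain a b where x: "x = (a, b)" by (cases x)
  obtain c d where y: "y = (c, d)" by (cases y)
  have "\<bar>a - c\<bar> + \<bar>b - d\<bar> = 1 \<longleftrightarrow> (c = a + 1 \<and> d = b) \<or> (c = a - 1 \<and> d = b) \<or> (c = a \<and> d = b + 1) \<or> (c = a \<and> d = b - 1)"
    by arith
  then show ?thesis unfolding adj_def x y by auto
qed

lemma finite_nbrs: "finite {y. adj x y}"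
  unfolding adj_char by simp

lemma adj_sym: "adj x y \<longleftrightarrow> adj y x"
  unfolding adj_def by (simp add: abs_minus_commute)

lemma adj_edges: "adj x y \<longleftrightarrow> (x, y) \<in> lattice_edges \<or> (y, x) \<in> lattice_edges"
  unfolding adj_char lattice_edges_def by auto

lemma edges_antisym: "(x, y) \<in> lattice_edges \<Longrightarrow> (y, x) \<notin> lattice_edges"
  unfolding lattice_edges_def by (cases x) (auto simp: prod_eq_iff)

lemma Vp_odd:
  fixes V V' :: "real \<Rightarrow> real"
  assumes d: "\<And>x. (V has_real_derivative V' x) (at x)" and s: "\<And>x. V (- x) = V x"
  shows "V' (- z) = - V' z"
proof -
  have "DERIV (\<lambda>x. V (- x)) z :> - V' (- z)" using d[of "- z"] by (simp add: DERIV_mirror)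
  moreover have "(\<lambda>x. V (- x)) = V" using s by auto
  ultimately have "DERIV V z :> - V' (- z)" by simp
  then have "V' z = - V' (- z)" using DERIV_unique d by blast
  then show ?thesis by simp
qed

lemma Vp_mono:
  fixes V' V'' :: "real \<Rightarrow> real"
  assumes d: "\<And>x. (V' has_real_derivative V'' x) (at x)" and lo: "\<And>x. aV \<le> V'' x" and hi: "\<And>x. V'' x \<le> AV"
    and qp: "q \<le> p"
  shows "aV * (p - q) \<le> V' p - V' q \<and> V' p - V' q \<le> AV * (p - q)"
proof (cases "q = p")
  case True then show ?thesis by simp
next
  case False
  then have "q < p" using qp by simp
  then obtain z where "V' p - V' q = (p - q) * V'' z" using MVT2[of q p V' V''] d by blast
  moreover have "aV * (p - q) \<le> (p - q) * V'' z" "(p - q) * V'' z \<le> AV * (p - q)"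
    using lo[of z] hi[of z] qp by (simp_all add: mult.commute mult_right_mono)
  ultimately show ?thesis by simp
qed

lemma Vp_pair:
  fixes V' V'' :: "real \<Rightarrow> real"
  assumes d: "\<And>x. (V' has_real_derivative V'' x) (at x)" and lo: "\<And>x. aV \<le> V'' x" and hi: "\<And>x. V'' x \<le> AV"
    and a0: "0 \<le> aV"
  shows "aV * (p - q)\<^sup>2 \<le> (V' p - V' q) * (p - q) \<and> \<bar>V' p - V' q\<bar> \<le> AV * \<bar>p - q\<bar>"
proof (cases "q \<le> p")
  case True
  note m = Vp_mono[OF d lo hi True]
  have "aV * (p - q)\<^sup>2 = (aV * (p - q)) * (p - q)" by (simp add: power2_eq_square)
  also have "\<dots> \<le> (V' p - V' q) * (p - q)" using m True by (intro mult_right_mono) auto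
  moreover have "0 \<le> aV * (p - q)" using a0 True by simp
  ultimately show ?thesis using m True by (auto simp: abs_if)
next
  case False
  then have pq: "p \<le> q" by simp
  note m = Vp_mono[OF d lo hi pq]
  have "aV * (p - q)\<^sup>2 = (aV * (q - p)) * (q - p)" by (simp add: power2_eq_square algebra_simps)
  also have "\<dots> \<le> (V' q - V' p) * (q - p)" using m pq by (intro mult_right_mono) auto
  also have "\<dots> = (V' p - V' q) * (p - q)" by (simp add: algebra_simps)
  moreover have "0 \<le> aV * (q - p)" using a0 pq by simp
  ultimately show ?thesis using m pq by (auto simp: abs_if)
qed



lemma sbp:
  fixes V' :: "real \<Rightarrow> real" and D :: "site set" and hD h'D \<psi> \<psi>' :: "site \<Rightarrow> real"
  assumes fin: "finite D" and odd: "\<And>z. V' (- z) = - V' z"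
    and pair: "\<And>p q. aV * (p - q)\<^sup>2 \<le> (V' p - V' q) * (p - q) \<and> \<bar>V' p - V' q\<bar> \<le> AV * \<bar>p - q\<bar>"
  shows "(\<Sum>x\<in>D. (hD x - h'D x) * (drift V' D \<psi> hD x - drift V' D \<psi>' h'D x))
     \<le> - aV * (\<Sum>e\<in>Dstar D. (grad (\<lambda>x. ext D hD \<psi> x - ext D h'D \<psi>' x) e)\<^sup>2)
       + AV * (\<Sum>e\<in>bdry_edges D. \<bar>\<psi> (bdry_pt D e) - \<psi>' (bdry_pt D e)\<bar>
            * \<bar>grad (\<lambda>x. ext D hD \<psi> x - ext D h'D \<psi>' x) e\<bar>)"
proof -
  define E where "E = ext D hD \<psi>"
  define E' where "E' = ext D h'D \<psi>'"
  define H where "H = (\<lambda>x. ext D hD \<psi> x - ext D h'D \<psi>' x)"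
  define N where "N x = {y. adj x y}" for x
  define \<Delta> where "\<Delta> x y = V' (E y - E x) - V' (E' y - E' x)" for x y
  define F where "F p = (if fst p \<in> D then H (fst p) * \<Delta> (fst p) (snd p) else 0)" for p
  define G where "G e = (if e \<in> bdry_edges D then \<bar>\<psi> (bdry_pt D e) - \<psi>' (bdry_pt D e)\<bar> * \<bar>grad H e\<bar> else 0)" for e
  have finN: "\<And>x. finite (N x)" unfolding N_def by (rule finite_nbrs)
  have finS: "finite (Sigma D N)" using fin finN by auto
  have DsS: "Dstar D \<subseteq> Sigma D N \<union> prod.swap ` Sigma D N"
  proof
    fix e assume e: "e \<in> Dstar D"
    obtain x y where exy: "e = (x, y)" by (cases e)
    have le: "(x, y) \<in> lattice_edges" and xy: "x \<in> D \<or> y \<in> D" using e exy unfolding Dstar_def by auto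
    have a: "adj x y" "adj y x" using le adj_edges adj_sym by blast+
    show "e \<in> Sigma D N \<union> prod.swap ` Sigma D N"
    proof (cases "x \<in> D")
      case True then show ?thesis using a exy unfolding N_def by auto
    next
      case False
      then have "(y, x) \<in> Sigma D N" using xy a unfolding N_def by auto
      then show ?thesis using exy by (auto intro: image_eqI[of _ _ "(y, x)"])
    qed
  qed
  have finDs: "finite (Dstar D)" by (rule finite_subset[OF DsS]) (use finS in auto)
  define Q where "Q = Dstar D \<union> prod.swap ` Dstar D"
  have finQ: "finite Q" unfolding Q_def using finDs by auto
  have SQ: "Sigma D N \<subseteq> Q"
  proof
    fix p assume p: "p \<in> Sigma D N"
    obtain x y where pxy: "p = (x, y)" by (cases p)
    have x: "x \<in> D" and a: "adj x y" using p pxy unfolding N_def by auto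
    show "p \<in> Q"
    proof (cases "(x, y) \<in> lattice_edges")
      case True then show ?thesis using x pxy unfolding Q_def Dstar_def by auto
    next
      case False
      then have "(y, x) \<in> lattice_edges" using a adj_edges by blast
      then have "(y, x) \<in> Dstar D" using x unfolding Dstar_def by auto
      then show ?thesis using pxy unfolding Q_def by (auto intro: image_eqI[of _ _ "(y, x)"])
    qed
  qed
  have Qadj: "adj (fst p) (snd p)" if "p \<in> Q" for p
    using that unfolding Q_def Dstar_def using adj_edges by auto
  have disj: "Dstar D \<inter> prod.swap ` Dstar D = {}"
    unfolding Dstar_def using edges_antisym by auto
  have step1: "(\<Sum>x\<in>D. (hD x - h'D x) * (drift V' D \<psi> hD x - drift V' D \<psi>' h'D x))
      = (\<Sum>x\<in>D. \<Sum>y\<in>N x. F (x, y))"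
  proof (rule sum.cong[OF refl])
    fix x assume x: "x \<in> D"
    have "drift V' D \<psi> hD x - drift V' D \<psi>' h'D x = (\<Sum>y\<in>N x. \<Delta> x y)"
      unfolding drift_def \<Delta>_def N_def E_def E'_def by (simp add: sum_subtractf)
    moreover have "hD x - h'D x = H x" unfolding H_def ext_def using x by simp
    ultimately show "(hD x - h'D x) * (drift V' D \<psi> hD x - drift V' D \<psi>' h'D x) = (\<Sum>y\<in>N x. F (x, y))"
      unfolding F_def using x by (simp add: sum_distrib_left)
  qed
  also have "\<dots> = (\<Sum>(x,y)\<in>Sigma D N. F (x, y))"
    by (rule sum.Sigma[OF fin]) (use finN in auto)
  also have "\<dots> = (\<Sum>p\<in>Sigma D N. F p)"
    by (simp add: case_prod_beta)
  also have "\<dots> = (\<Sum>p\<in>Q. F p)"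
  proof (rule sum.mono_neutral_left[OF finQ SQ])
    show "\<forall>i\<in>Q - Sigma D N. F i = 0"
    proof
      fix p assume p: "p \<in> Q - Sigma D N"
      have "fst p \<notin> D"
      proof
        assume "fst p \<in> D"
        moreover have "snd p \<in> N (fst p)" using Qadj p unfolding N_def by auto
        ultimately have "p \<in> Sigma D N" by (cases p) auto
        then show False using p by auto
      qed
      then show "F p = 0" unfolding F_def by simp
    qed
  qed
  also have "\<dots> = (\<Sum>p\<in>Dstar D. F p) + (\<Sum>p\<in>prod.swap ` Dstar D. F p)"
    unfolding Q_def by (rule sum.union_disjoint) (use finDs disj in auto)
  also have "(\<Sum>p\<in>prod.swap ` Dstar D. F p) = (\<Sum>p\<in>Dstar D. F (prod.swap p))"
    by (subst sum.reindex) (auto intro: inj_onI)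
  also have "(\<Sum>p\<in>Dstar D. F p) + (\<Sum>p\<in>Dstar D. F (prod.swap p)) = (\<Sum>e\<in>Dstar D. F e + F (prod.swap e))"
    by (simp add: sum.distrib)
  also have "\<dots> \<le> (\<Sum>e\<in>Dstar D. - aV * (grad H e)\<^sup>2 + AV * G e)"
  proof (rule sum_mono)
    fix e assume e: "e \<in> Dstar D"
    obtain x y where exy: "e = (x, y)" by (cases e)
    have le: "(x, y) \<in> lattice_edges" and xy: "x \<in> D \<or> y \<in> D" using e exy unfolding Dstar_def by auto
    have a: "adj x y" "adj y x" using le adj_edges adj_sym by blast+
    define d where "d = grad H e"
    have dH: "d = H y - H x" unfolding d_def grad_def exy by simp
    have dpq: "d = (E y - E x) - (E' y - E' x)" unfolding dH H_def E_def E'_def by simp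
    have P: "aV * d\<^sup>2 \<le> \<Delta> x y * d" "\<bar>\<Delta> x y\<bar> \<le> AV * \<bar>d\<bar>"
      using pair[of "E y - E x" "E' y - E' x"] unfolding \<Delta>_def dpq by auto
    have sw: "\<Delta> y x = - \<Delta> x y"
    proof -
      have "\<Delta> y x = V' (- (E y - E x)) - V' (- (E' y - E' x))" unfolding \<Delta>_def by simp
      then show ?thesis unfolding odd \<Delta>_def by simp
    qed
    have FF: "F e + F (prod.swap e) = (if x \<in> D then H x * \<Delta> x y else 0) - (if y \<in> D then H y * \<Delta> x y else 0)"
      unfolding F_def exy using sw by simp
    have absb: "u * \<Delta> x y \<le> \<bar>u\<bar> * (AV * \<bar>d\<bar>)" for u
    proof -
      have "u * \<Delta> x y \<le> \<bar>u\<bar> * \<bar>\<Delta> x y\<bar>" by (simp add: abs_mult[symmetric])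
      also have "\<dots> \<le> \<bar>u\<bar> * (AV * \<bar>d\<bar>)" using P(2) by (intro mult_left_mono) auto
      finally show ?thesis .
    qed
    have Pd: "aV * d\<^sup>2 \<le> d * \<Delta> x y" using P(1) by (simp add: mult.commute)
    show "F e + F (prod.swap e) \<le> - aV * (grad H e)\<^sup>2 + AV * G e"
    proof (cases "x \<in> D")
      case xD: True
      show ?thesis
      proof (cases "y \<in> D")
        case True
        have "e \<notin> bdry_edges D" unfolding exy bdry_edges_def bdry_def using xD True by auto
        then have "G e = 0" unfolding G_def by simp
        moreover have "F e + F (prod.swap e) = - (d * \<Delta> x y)" unfolding FF dH using xD True by (simp add: algebra_simps)
        ultimately show ?thesis using Pd unfolding d_def by simp
      next
        case False
        have yb: "y \<in> bdry D" unfolding bdry_def using False xD a by auto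
        have eb: "e \<in> bdry_edges D" unfolding exy bdry_edges_def using le xD yb by auto
        have bp: "bdry_pt D e = y" unfolding bdry_pt_def exy using xD by simp
        have Hy: "H y = \<psi> y - \<psi>' y" unfolding H_def ext_def using False by simp
        have "G e = \<bar>H y\<bar> * \<bar>d\<bar>" unfolding G_def using eb bp Hy d_def by simp
        moreover have "F e + F (prod.swap e) = H y * \<Delta> x y - d * \<Delta> x y" unfolding FF dH using xD False by (simp add: algebra_simps)
        ultimately show ?thesis using Pd absb[of "H y"] unfolding d_def by (simp add: algebra_simps)
      qed
    next
      case xnD: False
      then have yD: "y \<in> D" using xy by simp
      have xb: "x \<in> bdry D" unfolding bdry_def using xnD yD a by auto
      have eb: "e \<in> bdry_edges D" unfolding exy bdry_edges_def using le yD xb by auto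
      have bp: "bdry_pt D e = x" unfolding bdry_pt_def exy using xnD by simp
      have Hx: "H x = \<psi> x - \<psi>' x" unfolding H_def ext_def using xnD by simp
      have "G e = \<bar>H x\<bar> * \<bar>d\<bar>" unfolding G_def using eb bp Hx d_def by simp
      moreover have "F e + F (prod.swap e) = - (H x) * \<Delta> x y - d * \<Delta> x y" unfolding FF dH using xnD yD by (simp add: algebra_simps)
      ultimately show ?thesis using Pd absb[of "- H x"] unfolding d_def by (simp add: algebra_simps)
    qed
  qed
  also have "\<dots> = - aV * (\<Sum>e\<in>Dstar D. (grad H e)\<^sup>2) + AV * (\<Sum>e\<in>Dstar D. G e)"
    by (simp only: sum.distrib sum_distrib_left)
  also have "(\<Sum>e\<in>Dstar D. G e) = (\<Sum>e\<in>bdry_edges D. \<bar>\<psi> (bdry_pt D e) - \<psi>' (bdry_pt D e)\<bar> * \<bar>grad H e\<bar>)"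
  proof -
    have "bdry_edges D \<subseteq> Dstar D" unfolding bdry_edges_def Dstar_def by auto
    then have I: "Dstar D \<inter> bdry_edges D = bdry_edges D" by auto
    show ?thesis by (simp only: G_def sum.inter_restrict[OF finDs, symmetric] I)
  qed
  finally show ?thesis unfolding H_def .
qed


lemma cont_ext:
  assumes "\<forall>x\<in>D. continuous_on UNIV (\<lambda>t. h t x)"
  shows "continuous_on UNIV (\<lambda>t. ext D (h t) \<psi> y)"
  using assms by (cases "y \<in> D") (auto simp: ext_def)

lemma cont_grad:
  assumes "\<forall>x\<in>D. continuous_on UNIV (\<lambda>t. h t x)" "\<forall>x\<in>D. continuous_on UNIV (\<lambda>t. h' t x)"
  shows "continuous_on UNIV (\<lambda>t. grad (\<lambda>x. ext D (h t) \<psi> x - ext D (h' t) \<psi>' x) e)"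
  unfolding grad_def by (intro continuous_intros cont_ext assms)

lemma cont_drift:
  assumes cV: "continuous_on UNIV V'" and "\<forall>x\<in>D. continuous_on UNIV (\<lambda>t. h t x)"
  shows "continuous_on UNIV (\<lambda>t. drift V' D \<psi> (h t) x)"
  unfolding drift_def
proof (intro continuous_on_sum)
  fix y
  show "continuous_on UNIV (\<lambda>t. V' (ext D (h t) \<psi> y - ext D (h t) \<psi> x))"
    by (rule continuous_on_compose2[OF cV]) (auto intro!: continuous_intros cont_ext assms(2))
qed

theorem lemma3p3:
  fixes V V' V'' :: "real \<Rightarrow> real" and aV AV :: real
  assumes "\<And>x. (V has_real_derivative V' x) (at x)"
    and "\<And>x. (V' has_real_derivative V'' x) (at x)"
    and "\<And>x. V (- x) = V x"
    and "0 < aV" and "\<And>x. aV \<le> V'' x" and "\<And>x. V'' x \<le> AV"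
    and "\<exists>L. \<forall>x y. \<bar>V'' x - V'' y\<bar> \<le> L * \<bar>x - y\<bar>"
  shows "\<exists>C>0. \<forall>(D :: (int \<times> int) set) \<psi> \<psi>' a b W h h' la lb la' lb' S T.
     finite D \<and> (\<forall>x\<in>D. a x \<le> b x) \<and> (\<forall>x\<in>D. continuous_on UNIV (\<lambda>t. W t x)) \<and>
     langevin_sol V' D \<psi> a b W h la lb \<and> langevin_sol V' D \<psi>' a b W h' la' lb' \<and> S < T
     \<longrightarrow>
     (\<Sum>x\<in>D. (h T x - h' T x)\<^sup>2)
       + integral {S..T} (\<lambda>t. \<Sum>e\<in>Dstar D.
            (grad (\<lambda>x. ext D (h t) \<psi> x - ext D (h' t) \<psi>' x) e)\<^sup>2)
     \<le> C * ((\<Sum>x\<in>D. (h S x - h' S x)\<^sup>2)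
       + integral {S..T} (\<lambda>t. \<Sum>e\<in>bdry_edges D.
            \<bar>\<psi> (bdry_pt D e) - \<psi>' (bdry_pt D e)\<bar>
            * \<bar>grad (\<lambda>x. ext D (h t) \<psi> x - ext D (h' t) \<psi>' x) e\<bar>))"
proof -
  note dV = assms(1) and dV' = assms(2) and sym = assms(3) and aV = assms(4) and lo = assms(5) and hi = assms(6)
  have odd: "\<And>z. V' (- z) = - V' z" by (rule Vp_odd[OF dV sym])
  have pair: "\<And>p q. aV * (p - q)\<^sup>2 \<le> (V' p - V' q) * (p - q) \<and> \<bar>V' p - V' q\<bar> \<le> AV * \<bar>p - q\<bar>"
    by (rule Vp_pair[OF dV' lo hi]) (use aV in simp)
  have cV: "continuous_on UNIV V'"
    using dV' by (intro continuous_at_imp_continuous_on) (auto intro: DERIV_isCont)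
  have AV0: "AV \<ge> aV" using lo[of 0] hi[of 0] by simp
  define K where "K = max 1 (2 * AV)"
  define c where "c = min 1 (2 * aV)"
  have c0: "c > 0" unfolding c_def using aV by simp
  have K0: "K > 0" unfolding K_def by simp
  show ?thesis
  proof (intro exI[of _ "K / c"] conjI allI impI)
    show "K / c > 0" using c0 K0 by simp
    fix D :: "(int \<times> int) set" and \<psi> \<psi>' :: "site \<Rightarrow> real" and a b :: "site \<Rightarrow> ereal"
      and W h h' la lb la' lb' :: "real \<Rightarrow> site \<Rightarrow> real" and S T :: real
    assume hyp: "finite D \<and> (\<forall>x\<in>D. a x \<le> b x) \<and> (\<forall>x\<in>D. continuous_on UNIV (\<lambda>t. W t x)) \<and>
     langevin_sol V' D \<psi> a b W h la lb \<and> langevin_sol V' D \<psi>' a b W h' la' lb' \<and> S < T"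
    then have fin: "finite D" and sol1: "langevin_sol V' D \<psi> a b W h la lb"
      and sol2: "langevin_sol V' D \<psi>' a b W h' la' lb'" and ST: "S < T" by auto
    note S1 = sol1[unfolded langevin_sol_def]
    have ch: "\<forall>x\<in>D. continuous_on UNIV (\<lambda>t. h t x)"
      by (rule S1[THEN conjunct1])
    have ab1: "\<forall>x\<in>D. \<forall>t. a x \<le> ereal (h t x) \<and> ereal (h t x) \<le> b x"
      by (rule S1[THEN conjunct2, THEN conjunct1])
    have mono1: "\<forall>x\<in>D. mono (\<lambda>t. la t x) \<and> mono (\<lambda>t. lb t x)"
      by (rule S1[THEN conjunct2, THEN conjunct2, THEN conjunct1])
    have la1: "\<forall>x\<in>D. \<forall>s t. s \<le> t \<and> (\<forall>u\<in>{s..t}. ereal (h u x) \<noteq> a x) \<longrightarrow> la s x = la t x"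
      by (rule S1[THEN conjunct2, THEN conjunct2, THEN conjunct2, THEN conjunct2, THEN conjunct2, THEN conjunct1])
    have lb1: "\<forall>x\<in>D. \<forall>s t. s \<le> t \<and> (\<forall>u\<in>{s..t}. ereal (h u x) \<noteq> b x) \<longrightarrow> lb s x = lb t x"
      by (rule S1[THEN conjunct2, THEN conjunct2, THEN conjunct2, THEN conjunct2, THEN conjunct2, THEN conjunct2, THEN conjunct1])
    have eq1: "\<forall>x\<in>D. \<forall>s t. s \<le> t \<longrightarrow>
        h t x - h s x = integral {s..t} (\<lambda>u. drift V' D \<psi> (h u) x)
                        + (la t x - la s x) - (lb t x - lb s x)
                        + sqrt 2 * (W t x - W s x)"
      by (rule S1[THEN conjunct2, THEN conjunct2, THEN conjunct2, THEN conjunct2, THEN conjunct2, THEN conjunct2, THEN conjunct2])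

    note S2 = sol2[unfolded langevin_sol_def]
    have ch': "\<forall>x\<in>D. continuous_on UNIV (\<lambda>t. h' t x)"
      by (rule S2[THEN conjunct1])
    have ab2: "\<forall>x\<in>D. \<forall>t. a x \<le> ereal (h' t x) \<and> ereal (h' t x) \<le> b x"
      by (rule S2[THEN conjunct2, THEN conjunct1])
    have mono2: "\<forall>x\<in>D. mono (\<lambda>t. la' t x) \<and> mono (\<lambda>t. lb' t x)"
      by (rule S2[THEN conjunct2, THEN conjunct2, THEN conjunct1])
    have la2: "\<forall>x\<in>D. \<forall>s t. s \<le> t \<and> (\<forall>u\<in>{s..t}. ereal (h' u x) \<noteq> a x) \<longrightarrow> la' s x = la' t x"
      by (rule S2[THEN conjunct2, THEN conjunct2, THEN conjunct2, THEN conjunct2, THEN conjunct2, THEN conjunct1])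
    have lb2: "\<forall>x\<in>D. \<forall>s t. s \<le> t \<and> (\<forall>u\<in>{s..t}. ereal (h' u x) \<noteq> b x) \<longrightarrow> lb' s x = lb' t x"
      by (rule S2[THEN conjunct2, THEN conjunct2, THEN conjunct2, THEN conjunct2, THEN conjunct2, THEN conjunct2, THEN conjunct1])
    have eq2: "\<forall>x\<in>D. \<forall>s t. s \<le> t \<longrightarrow>
        h' t x - h' s x = integral {s..t} (\<lambda>u. drift V' D \<psi>' (h' u) x)
                        + (la' t x - la' s x) - (lb' t x - lb' s x)
                        + sqrt 2 * (W t x - W s x)"
      by (rule S2[THEN conjunct2, THEN conjunct2, THEN conjunct2, THEN conjunct2, THEN conjunct2, THEN conjunct2, THEN conjunct2])

    define g where "g x t = h t x - h' t x" for x t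
    define f where "f x t = drift V' D \<psi> (h t) x - drift V' D \<psi>' (h' t) x" for x t
    define L where "L x t = (la t x - lb t x) - (la' t x - lb' t x)" for x t
    have cf: "continuous_on UNIV (f x)" for x
      unfolding f_def by (intro continuous_intros cont_drift cV ch ch')
    have cg: "continuous_on UNIV (g x)" if x: "x \<in> D" for x
      unfolding g_def using ch ch' x by (intro continuous_intros) auto
    have site: "(g x T)\<^sup>2 - (g x S)\<^sup>2 \<le> 2 * integral {S..T} (\<lambda>u. g x u * f x u)" if x: "x \<in> D" for x
    proof (rule energy_1d[OF cg[OF x] cf])
      show "S \<le> T" using ST by simp
      fix s t :: real assume st: "s \<le> t"
      have i1: "(\<lambda>u. drift V' D \<psi> (h u) x) integrable_on {s..t}" by (rule cont_int, rule cont_drift[OF cV ch])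
      have i2: "(\<lambda>u. drift V' D \<psi>' (h' u) x) integrable_on {s..t}" by (rule cont_int, rule cont_drift[OF cV ch'])
      have "integral {s..t} (f x) = integral {s..t} (\<lambda>u. drift V' D \<psi> (h u) x) - integral {s..t} (\<lambda>u. drift V' D \<psi>' (h' u) x)"
        unfolding f_def by (rule integral_diff[OF i1 i2])
      then show "g x t - g x s = integral {s..t} (f x) + (L x t - L x s)"
        using eq1[rule_format, OF x st] eq2[rule_format, OF x st] unfolding g_def L_def by (simp add: algebra_simps)
    next
      fix s t :: real assume st: "s \<le> t" and gp: "\<forall>u\<in>{s..t}. g x u > 0"
      have "la s x = la t x"
      proof (rule la1[rule_format, OF x], intro conjI st ballI)
        fix u assume "u \<in> {s..t}"
        then have "h' u x < h u x" using gp unfolding g_def by auto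
        moreover have "a x \<le> ereal (h' u x)" using ab2 x by auto
        ultimately have "a x < ereal (h u x)" using le_less_trans[of "a x" "ereal (h' u x)" "ereal (h u x)"] by simp
        then show "ereal (h u x) \<noteq> a x" by auto
      qed
      moreover have "lb' s x = lb' t x"
      proof (rule lb2[rule_format, OF x], intro conjI st ballI)
        fix u assume "u \<in> {s..t}"
        then have "h' u x < h u x" using gp unfolding g_def by auto
        moreover have "ereal (h u x) \<le> b x" using ab1 x by auto
        ultimately have "ereal (h' u x) < b x" using less_le_trans[of "ereal (h' u x)" "ereal (h u x)" "b x"] by simp
        then show "ereal (h' u x) \<noteq> b x" by auto
      qed
      moreover have "lb s x \<le> lb t x" "la' s x \<le> la' t x" using mono1 mono2 x st unfolding mono_def by auto
      ultimately show "L x t \<le> L x s" unfolding L_def by simp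
    next
      fix s t :: real assume st: "s \<le> t" and gn: "\<forall>u\<in>{s..t}. g x u < 0"
      have "la' s x = la' t x"
      proof (rule la2[rule_format, OF x], intro conjI st ballI)
        fix u assume "u \<in> {s..t}"
        then have "h u x < h' u x" using gn unfolding g_def by auto
        moreover have "a x \<le> ereal (h u x)" using ab1 x by auto
        ultimately have "a x < ereal (h' u x)" using le_less_trans[of "a x" "ereal (h u x)" "ereal (h' u x)"] by simp
        then show "ereal (h' u x) \<noteq> a x" by auto
      qed
      moreover have "lb s x = lb t x"
      proof (rule lb1[rule_format, OF x], intro conjI st ballI)
        fix u assume "u \<in> {s..t}"
        then have "h u x < h' u x" using gn unfolding g_def by auto
        moreover have "ereal (h' u x) \<le> b x" using ab2 x by auto
        ultimately have "ereal (h u x) < b x" using less_le_trans[of "ereal (h u x)" "ereal (h' u x)" "b x"] by simp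
        then show "ereal (h u x) \<noteq> b x" by auto
      qed
      moreover have "la s x \<le> la t x" "lb' s x \<le> lb' t x" using mono1 mono2 x st unfolding mono_def by auto
      ultimately show "L x s \<le> L x t" unfolding L_def by simp
    qed
    define A where "A t = (\<Sum>e\<in>Dstar D. (grad (\<lambda>x. ext D (h t) \<psi> x - ext D (h' t) \<psi>' x) e)\<^sup>2)" for t
    define B where "B t = (\<Sum>e\<in>bdry_edges D. \<bar>\<psi> (bdry_pt D e) - \<psi>' (bdry_pt D e)\<bar>
            * \<bar>grad (\<lambda>x. ext D (h t) \<psi> x - ext D (h' t) \<psi>' x) e\<bar>)" for t
    have cA: "continuous_on UNIV A" unfolding A_def by (intro continuous_intros cont_grad ch ch')
    have cB: "continuous_on UNIV B" unfolding B_def by (intro continuous_intros cont_grad ch ch')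
    have iA: "A integrable_on {S..T}" by (rule cont_int[OF cA])
    have iB: "B integrable_on {S..T}" by (rule cont_int[OF cB])
    have cgf: "continuous_on UNIV (\<lambda>u. g x u * f x u)" if "x \<in> D" for x
      by (intro continuous_intros cg cf that)
    define X where "X = (\<Sum>x\<in>D. (h T x - h' T x)\<^sup>2)"
    define Y where "Y = (\<Sum>x\<in>D. (h S x - h' S x)\<^sup>2)"
    have "X - Y = (\<Sum>x\<in>D. (g x T)\<^sup>2 - (g x S)\<^sup>2)" unfolding X_def Y_def g_def by (simp add: sum_subtractf)
    also have "\<dots> \<le> (\<Sum>x\<in>D. 2 * integral {S..T} (\<lambda>u. g x u * f x u))" by (rule sum_mono) (rule site)
    also have "\<dots> = 2 * integral {S..T} (\<lambda>u. \<Sum>x\<in>D. g x u * f x u)"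
      by (simp add: sum_distrib_left[symmetric] integral_sum[OF fin] cont_int cgf)
    also have "integral {S..T} (\<lambda>u. \<Sum>x\<in>D. g x u * f x u) \<le> integral {S..T} (\<lambda>u. - aV * A u + AV * B u)"
    proof (rule integral_le)
      show "(\<lambda>u. \<Sum>x\<in>D. g x u * f x u) integrable_on {S..T}"
        by (rule cont_int, intro continuous_on_sum cgf)
      show "(\<lambda>u. - aV * A u + AV * B u) integrable_on {S..T}"
        by (rule cont_int, intro continuous_intros cA cB)
      fix u
      show "(\<Sum>x\<in>D. g x u * f x u) \<le> - aV * A u + AV * B u"
        unfolding g_def f_def A_def B_def by (rule sbp[OF fin odd pair])
    qed
    also have "integral {S..T} (\<lambda>u. - aV * A u + AV * B u) = - aV * integral {S..T} A + AV * integral {S..T} B"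
    proof (subst integral_add)
      show "(\<lambda>u. - aV * A u) integrable_on {S..T}" by (rule cont_int, intro continuous_intros cA)
      show "(\<lambda>u. AV * B u) integrable_on {S..T}" by (rule cont_int, intro continuous_intros cB)
    qed simp
    finally have main: "X - Y \<le> 2 * (- aV * integral {S..T} A + AV * integral {S..T} B)" by simp
    have X0: "X \<ge> 0" unfolding X_def by (simp add: sum_nonneg)
    have Y0: "Y \<ge> 0" unfolding Y_def by (simp add: sum_nonneg)
    have IA0: "integral {S..T} A \<ge> 0" by (rule integral_nonneg[OF iA]) (simp add: A_def sum_nonneg)
    have IB0: "integral {S..T} B \<ge> 0" by (rule integral_nonneg[OF iB]) (simp add: B_def sum_nonneg)
    have "c * (X + integral {S..T} A) \<le> X + 2 * aV * integral {S..T} A"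
    proof -
      have "c * X \<le> 1 * X" using X0 unfolding c_def by (intro mult_right_mono) auto
      moreover have "c * integral {S..T} A \<le> (2 * aV) * integral {S..T} A" using IA0 unfolding c_def by (intro mult_right_mono) auto
      ultimately show ?thesis by (simp add: algebra_simps)
    qed
    also have "\<dots> \<le> Y + 2 * AV * integral {S..T} B" using main by (simp add: algebra_simps)
    also have "\<dots> \<le> K * (Y + integral {S..T} B)"
    proof -
      have "1 * Y \<le> K * Y" using Y0 unfolding K_def by (intro mult_right_mono) auto
      then have "Y \<le> K * Y" by simp
      moreover have "2 * AV * integral {S..T} B \<le> K * integral {S..T} B" using IB0 unfolding K_def by (intro mult_right_mono) auto
      ultimately show ?thesis by (simp add: algebra_simps)
    qed
    finally have fin2: "c * (X + integral {S..T} A) \<le> K * (Y + integral {S..T} B)" .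
    have "X + integral {S..T} A \<le> K / c * (Y + integral {S..T} B)"
      using fin2 c0 by (simp add: field_simps)
    then show "(\<Sum>x\<in>D. (h T x - h' T x)\<^sup>2)
       + integral {S..T} (\<lambda>t. \<Sum>e\<in>Dstar D.
            (grad (\<lambda>x. ext D (h t) \<psi> x - ext D (h' t) \<psi>' x) e)\<^sup>2)
     \<le> K / c * ((\<Sum>x\<in>D. (h S x - h' S x)\<^sup>2)
       + integral {S..T} (\<lambda>t. \<Sum>e\<in>bdry_edges D.
            \<bar>\<psi> (bdry_pt D e) - \<psi>' (bdry_pt D e)\<bar>
            * \<bar>grad (\<lambda>x. ext D (h t) \<psi> x - ext D (h' t) \<psi>' x) e\<bar>))"
      unfolding X_def Y_def A_def B_def by simp
  qed
qed

end
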